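(* Let $G$ be a finite abstract simplicial complex of odd maximal dimension $d$. If $G$ is Dehn-Sommerville, then $w(G)=0$. In particular, every odd-dimensional $d$-manifold $G$ satisfies $w(G)=0$.
   Context: A finite abstract simplicial complex is a finite set of non-empty finite sets closed under taking non-empty subsets; its maximal dimension is $d=\max_{x\in G}(|x|-1)$. For $x\in G$, $w(x)=(-1)^{|x|-1}$ and $w(G)=\sum_{x\in G}w(x)$. $f_k(G)$ is the number of elements of $G$ of cardinality $k+1$, $f_G(t)=1+\sum_{k=0}^{d} f_k(G)\,t^{k+1}$, and $h_G(x)=(x-1)^{d+1} f_G(1/(x-1)) = h_0+h_1x+\cdots+h_{d+1}x^{d+1}$. $G$ is Dehn-Sommerville if $h_i=h_{d+1-i}$ for all $i$. Manifolds: for $x\in G$, $U(x)=\{y\in G: x\subset y\}$, $B(x)=\{y\in G : y\subset z \text{ for some } z\in U(x)\}$, $S(x)=B(x)\setminus U(x)$. A one-point complex is contractible, and $G$ is contractible if there is $x\in G$ with $S(x)$ and $G\setminus U(x)$ contractible. The empty complex is the $(-1)$-sphere; for $k\ge0$, $G$ is a $k$-manifold if every $S(x)$ is a $(k-1)$-sphere, and a $k$-sphere if it is a $k$-manifold and $G\setminus U(x)$ is contractible for some $x$. *)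

theory Defs
  imports "HOL-Computational_Algebra.Polynomial"
begin

definition simplicial_complex :: "'a set set \<Rightarrow> bool" where
  "simplicial_complex G \<longleftrightarrow> finite G \<and> (\<forall>x\<in>G. x \<noteq> {} \<and> finite x) \<and>
     (\<forall>x\<in>G. \<forall>y. y \<noteq> {} \<and> y \<subseteq> x \<longrightarrow> y \<in> G)"

text \<open>Maximal dimension d = max (|x| - 1) (meaningful for non-empty G).\<close>
definition cdim :: "'a set set \<Rightarrow> nat" where
  "cdim G = Max ((\<lambda>x. card x - 1) ` G)"

definition wG :: "'a set set \<Rightarrow> int" where
  "wG G = (\<Sum>x\<in>G. (-1) ^ (card x - 1))"

definition fnum :: "'a set set \<Rightarrow> nat \<Rightarrow> nat" where
  "fnum G k = card {x \<in> G. card x = k + 1}"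

text \<open>h_G(x) = (x-1)^(d+1) f_G(1/(x-1)), with f_G(t) = 1 + sum_{k=0}^d f_k t^(k+1),
  written out as a polynomial: (x-1)^(d+1) + sum_{k=0}^d f_k (x-1)^(d-k).\<close>
definition hpoly :: "'a set set \<Rightarrow> int poly" where
  "hpoly G = [:-1, 1:] ^ (cdim G + 1)
     + (\<Sum>k\<le>cdim G. of_nat (fnum G k) * [:-1, 1:] ^ (cdim G - k))"

definition dehn_sommerville :: "'a set set \<Rightarrow> bool" where
  "dehn_sommerville G \<longleftrightarrow>
     (\<forall>i\<le>cdim G + 1. coeff (hpoly G) i = coeff (hpoly G) (cdim G + 1 - i))"

definition Ustar :: "'a set set \<Rightarrow> 'a set \<Rightarrow> 'a set set" where
  "Ustar G x = {y \<in> G. x \<subseteq> y}"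

definition Bstar :: "'a set set \<Rightarrow> 'a set \<Rightarrow> 'a set set" where
  "Bstar G x = {y \<in> G. \<exists>z\<in>Ustar G x. y \<subseteq> z}"

definition Sph :: "'a set set \<Rightarrow> 'a set \<Rightarrow> 'a set set" where
  "Sph G x = Bstar G x - Ustar G x"

inductive contractible :: "'a set set \<Rightarrow> bool" where
  one_point: "contractible {{v}}"
| step: "x \<in> G \<Longrightarrow> contractible (Sph G x) \<Longrightarrow> contractible (G - Ustar G x)
         \<Longrightarrow> contractible G"

text \<open>sphere_sh n G  means: G is an (n-1)-sphere.\<close>
fun sphere_sh :: "nat \<Rightarrow> 'a set set \<Rightarrow> bool" where
  "sphere_sh 0 G = (G = {})"
| "sphere_sh (Suc k) G =
     ((\<forall>x\<in>G. sphere_sh k (Sph G x)) \<and> (\<exists>x\<in>G. contractible (G - Ustar G x)))"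

definition manifold :: "nat \<Rightarrow> 'a set set \<Rightarrow> bool" where
  "manifold k G \<longleftrightarrow> (\<forall>x\<in>G. sphere_sh k (Sph G x))"

end

theory Submission
  imports Defs
begin

definition wt :: "'a set \<Rightarrow> int" where "wt y = (-1) ^ (card y - 1)"

lemma wG_wt: "wG G = sum wt G" unfolding wG_def wt_def by simp

lemma sc_finite: "simplicial_complex G \<Longrightarrow> finite G" by (simp add: simplicial_complex_def)

lemma sc_sub: "simplicial_complex G \<Longrightarrow> y \<in> G \<Longrightarrow> z \<subseteq> y \<Longrightarrow> z \<noteq> {} \<Longrightarrow> z \<in> G"
  unfolding simplicial_complex_def by blast

lemma sc_ne: "simplicial_complex G \<Longrightarrow> y \<in> G \<Longrightarrow> y \<noteq> {} \<and> finite y"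
  unfolding simplicial_complex_def by blast

lemma Bstar_eq: assumes "simplicial_complex G" "x \<in> G"
  shows "Bstar G x = {y\<in>G. y \<union> x \<in> G}"
proof -
  have "y \<union> x \<in> G" if "y \<in> G" "z \<in> G" "x \<subseteq> z" "y \<subseteq> z" for y z
    using sc_sub[OF assms(1) that(2)] sc_ne[OF assms(1) that(1)] that by auto
  then show ?thesis unfolding Bstar_def Ustar_def by auto
qed

lemma Bstar_sum: assumes sc: "simplicial_complex G" and xG: "x \<in> G"
  shows "sum wt (Bstar G x) = 1"
proof -
  from sc_ne[OF sc xG] have xne: "x \<noteq> {}" and fx: "finite x" by auto
  then obtain v where v: "v \<in> x" by blast
  have fG: "finite G" using sc by (simp add: simplicial_complex_def)
  define B where "B = {y\<in>G. y \<union> x \<in> G}"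
  have fB: "finite B" using fG unfolding B_def by auto
  define A0 where "A0 = {y\<in>B. v \<notin> y}"
  define A1 where "A1 = {y\<in>B. v \<in> y}"
  have split: "sum wt B = sum wt A0 + sum wt A1"
    unfolding A0_def A1_def using fB by (subst sum.union_disjoint[symmetric]) (auto intro: sum.cong)
  have vG: "{v} \<in> G" using sc_sub[OF sc xG] v by blast
  have vB: "{v} \<in> A1"
    using xG v vG unfolding A1_def B_def by (simp add: insert_absorb)
  have bij: "bij_betw (insert v) A0 (A1 - {{v}})"
  proof (rule bij_betw_byWitness[where f' = "\<lambda>y. y - {v}"])
    show "\<forall>a\<in>A0. insert v a - {v} = a" unfolding A0_def by auto
    show "\<forall>a'\<in>A1 - {{v}}. insert v (a' - {v}) = a'" unfolding A1_def by auto
    show "insert v ` A0 \<subseteq> A1 - {{v}}"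
    proof
      fix z assume "z \<in> insert v ` A0"
      then obtain y where y: "y \<in> A0" "z = insert v y" by auto
      have yne: "y \<noteq> {}" using y sc_ne[OF sc] unfolding A0_def B_def by auto
      have yx: "y \<union> x \<in> G" and vy: "v \<notin> y" using y unfolding A0_def B_def by auto
      have sub: "insert v y \<subseteq> y \<union> x" using v by auto
      have iG: "insert v y \<in> G" by (rule sc_sub[OF sc yx sub]) simp
      have e: "insert v y \<union> x = y \<union> x" using v by auto
      have ne: "insert v y \<noteq> {v}" using yne vy by auto
      show "z \<in> A1 - {{v}}" unfolding A1_def B_def using iG e yx ne y(2) by simp
    qed
    show "(\<lambda>y. y - {v}) ` (A1 - {{v}}) \<subseteq> A0"
    proof
      fix z assume "z \<in> (\<lambda>y. y - {v}) ` (A1 - {{v}})"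
      then obtain y where y: "y \<in> A1" "y \<noteq> {v}" "z = y - {v}" by auto
      have "y \<in> G" "y \<union> x \<in> G" "v \<in> y" using y unfolding A1_def B_def by auto
      then have "y \<noteq> {}" by auto
      have zne: "z \<noteq> {}" using y \<open>v \<in> y\<close> by auto
      have s1: "z \<subseteq> y" "z \<union> x \<subseteq> y \<union> x" using y(3) by auto
      have "z \<in> G" by (rule sc_sub[OF sc \<open>y \<in> G\<close> s1(1) zne])
      moreover have "z \<union> x \<in> G" by (rule sc_sub[OF sc \<open>y \<union> x \<in> G\<close> s1(2)]) (use zne in simp)
      moreover have "v \<notin> z" using y(3) by simp
      ultimately show "z \<in> A0" unfolding A0_def B_def by simp
    qed
  qed
  have cardA0: "y \<in> A0 \<Longrightarrow> finite y \<and> y \<noteq> {}" for y using sc_ne[OF sc] unfolding A0_def B_def by auto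
  have "sum wt A1 = wt {v} + sum wt (A1 - {{v}})"
    using vB fB unfolding A1_def by (simp add: sum.remove)
  also have "sum wt (A1 - {{v}}) = sum (wt \<circ> insert v) A0"
    using sum.reindex_bij_betw[OF bij, of wt] by simp
  also have "\<dots> = sum (\<lambda>y. - wt y) A0"
  proof (rule sum.cong)
    fix y assume "y \<in> A0"
    then have "finite y" "y \<noteq> {}" "v \<notin> y" using cardA0 unfolding A0_def by auto
    then show "(wt \<circ> insert v) y = - wt y" unfolding wt_def
      by (cases "card y") auto
  qed simp
  finally have "sum wt B = 1" using split by (simp add: wt_def sum_negf)
  then show ?thesis using Bstar_eq[OF sc xG] B_def by simp
qed


lemma Sph_split: "Bstar G x = Ustar G x \<union> Sph G x" "Ustar G x \<inter> Sph G x = {}"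
  unfolding Sph_def Bstar_def Ustar_def by auto

lemma Ustar_sum: assumes sc: "simplicial_complex G" and xG: "x \<in> G"
  shows "sum wt (Ustar G x) = 1 - sum wt (Sph G x)"
proof -
  have f: "finite (Bstar G x)" using sc_finite[OF sc] unfolding Bstar_def by auto
  have "sum wt (Bstar G x) = sum wt (Ustar G x) + sum wt (Sph G x)"
    using f by (simp add: Sph_split sum.union_disjoint)
  then show ?thesis using Bstar_sum[OF sc xG] by simp
qed

lemma sc_Sph: assumes sc: "simplicial_complex G" shows "simplicial_complex (Sph G x)"
proof -
  have "finite (Sph G x)" using sc_finite[OF sc] unfolding Sph_def Bstar_def by auto
  moreover have "\<forall>y\<in>Sph G x. y \<noteq> {} \<and> finite y" using sc_ne[OF sc] unfolding Sph_def Bstar_def by auto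
  moreover have "y' \<in> Sph G x" if "y \<in> Sph G x" "y' \<noteq> {}" "y' \<subseteq> y" for y y'
  proof -
    from that(1) obtain z where z: "y \<in> G" "z \<in> G" "x \<subseteq> z" "y \<subseteq> z" "\<not> x \<subseteq> y"
      unfolding Sph_def Bstar_def Ustar_def by auto
    have "y' \<in> G" by (rule sc_sub[OF sc z(1) that(3,2)])
    moreover have "\<not> x \<subseteq> y'" using z(5) that(3) by auto
    moreover have "y' \<subseteq> z" using z(4) that(3) by auto
    ultimately show ?thesis using z unfolding Sph_def Bstar_def Ustar_def by blast
  qed
  ultimately show ?thesis unfolding simplicial_complex_def by blast
qed

lemma sc_minus: assumes sc: "simplicial_complex G" shows "simplicial_complex (G - Ustar G x)"
proof -
  have "finite (G - Ustar G x)" using sc_finite[OF sc] by auto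
  moreover have "\<forall>y\<in>G - Ustar G x. y \<noteq> {} \<and> finite y" using sc_ne[OF sc] by auto
  moreover have "y' \<in> G - Ustar G x" if "y \<in> G - Ustar G x" "y' \<noteq> {}" "y' \<subseteq> y" for y y'
  proof -
    from that(1) have z: "y \<in> G" "\<not> x \<subseteq> y" unfolding Ustar_def by auto
    have "y' \<in> G" by (rule sc_sub[OF sc z(1) that(3,2)])
    moreover have "\<not> x \<subseteq> y'" using z(2) that(3) by auto
    ultimately show ?thesis unfolding Ustar_def by auto
  qed
  ultimately show ?thesis unfolding simplicial_complex_def by blast
qed

lemma split_U: "finite G \<Longrightarrow> sum wt G = sum wt (G - Ustar G x) + sum wt (Ustar G x)"
proof -
  assume f: "finite G"
  have "Ustar G x \<subseteq> G" unfolding Ustar_def by auto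
  then show ?thesis using f by (metis add.commute sum.subset_diff)
qed

lemma contractible_chi: "contractible G \<Longrightarrow> simplicial_complex G \<Longrightarrow> sum wt G = 1"
proof (induction rule: contractible.induct)
  case (one_point v) then show ?case by (simp add: wt_def)
next
  case (step x G)
  have "sum wt G = sum wt (G - Ustar G x) + sum wt (Ustar G x)"
    using split_U sc_finite[OF step.prems] by blast
  also have "sum wt (G - Ustar G x) = 1" using step.IH(2) sc_minus[OF step.prems] by blast
  also have "sum wt (Ustar G x) = 1 - sum wt (Sph G x)" using Ustar_sum[OF step.prems step.hyps(1)] .
  also have "sum wt (Sph G x) = 1" using step.IH(1) sc_Sph[OF step.prems] by blast
  finally show ?case by simp
qed

lemma sphere_chi: "sphere_sh n H \<Longrightarrow> simplicial_complex H \<Longrightarrow> sum wt H = 1 - (-1) ^ n"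
proof (induction n arbitrary: H)
  case 0 then show ?case by simp
next
  case (Suc k)
  from Suc.prems(1) obtain x where x: "x \<in> H" "contractible (H - Ustar H x)" by auto
  have "sum wt H = sum wt (H - Ustar H x) + sum wt (Ustar H x)"
    using split_U sc_finite[OF Suc.prems(2)] by blast
  also have "sum wt (H - Ustar H x) = 1" using contractible_chi x(2) sc_minus[OF Suc.prems(2)] by blast
  also have "sum wt (Ustar H x) = 1 - sum wt (Sph H x)" using Ustar_sum[OF Suc.prems(2) x(1)] .
  also have "sum wt (Sph H x) = 1 - (-1) ^ k" using Suc.IH Suc.prems(1) x(1) sc_Sph[OF Suc.prems(2)] by auto
  finally show ?case by simp
qed

lemma simplex_sum: assumes sc: "simplicial_complex G" and zG: "z \<in> G"
  shows "sum wt {x \<in> G. x \<subseteq> z} = 1"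
proof -
  define G' where "G' = {x \<in> G. x \<subseteq> z}"
  have sc': "simplicial_complex G'"
  proof -
    have "finite G'" using sc_finite[OF sc] unfolding G'_def by auto
    moreover have "\<forall>y\<in>G'. y \<noteq> {} \<and> finite y" using sc_ne[OF sc] unfolding G'_def by auto
    moreover have "y' \<in> G'" if "y \<in> G'" "y' \<noteq> {}" "y' \<subseteq> y" for y y'
      using sc_sub[OF sc _ that(3,2)] that(1,3) unfolding G'_def by auto
    ultimately show ?thesis unfolding simplicial_complex_def by blast
  qed
  have zG': "z \<in> G'" using zG unfolding G'_def by auto
  have "Bstar G' z = G'" unfolding Bstar_def Ustar_def using zG' unfolding G'_def by blast
  then show ?thesis using Bstar_sum[OF sc' zG'] G'_def by simp
qed

lemma double_count: assumes sc: "simplicial_complex G"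
  shows "sum wt G = (\<Sum>x\<in>G. wt x * sum wt (Ustar G x))"
proof -
  have f: "finite G" using sc_finite[OF sc] .
  have "(\<Sum>x\<in>G. wt x * sum wt (Ustar G x)) = (\<Sum>x\<in>G. \<Sum>z\<in>{z. z \<in> G \<and> x \<subseteq> z}. wt x * wt z)"
    unfolding Ustar_def by (simp add: sum_distrib_left)
  also have "\<dots> = (\<Sum>z\<in>G. \<Sum>x\<in>{x. x \<in> G \<and> x \<subseteq> z}. wt x * wt z)"
    by (rule sum.swap_restrict[OF f f])
  also have "\<dots> = (\<Sum>z\<in>G. wt z * sum wt {x \<in> G. x \<subseteq> z})"
    by (simp add: sum_distrib_left sum_distrib_right mult.commute)
  also have "\<dots> = (\<Sum>z\<in>G. wt z)"
    by (rule sum.cong) (simp_all add: simplex_sum[OF sc])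
  finally show ?thesis by simp
qed

lemma manifold_chi: assumes sc: "simplicial_complex G" and d: "odd d" and m: "manifold d G"
  shows "wG G = 0"
proof -
  have "sum wt G = (\<Sum>x\<in>G. wt x * sum wt (Ustar G x))" by (rule double_count[OF sc])
  also have "\<dots> = (\<Sum>x\<in>G. - wt x)"
  proof (rule sum.cong)
    fix x assume x: "x \<in> G"
    have "sum wt (Sph G x) = 1 - (-1) ^ d"
      using sphere_chi m x sc_Sph[OF sc] unfolding manifold_def by blast
    then have "sum wt (Sph G x) = 2" using d by simp
    then show "wt x * sum wt (Ustar G x) = - wt x" using Ustar_sum[OF sc x] by simp
  qed simp
  finally show ?thesis unfolding wG_wt by (simp add: sum_negf)
qed


lemma wG_fnum: assumes sc: "simplicial_complex G"
  shows "wG G = (\<Sum>k\<le>cdim G. int (fnum G k) * (-1) ^ k)"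
proof -
  have f: "finite G" using sc_finite[OF sc] .
  have img: "(\<lambda>x. card x - 1) ` G \<subseteq> {..cdim G}"
    unfolding cdim_def using f by auto
  have "wG G = (\<Sum>k\<le>cdim G. \<Sum>x\<in>{x \<in> G. card x - 1 = k}. wt x)"
    unfolding wG_wt by (rule sum.group[OF f _ img, symmetric]) simp
  also have "\<dots> = (\<Sum>k\<le>cdim G. int (fnum G k) * (-1) ^ k)"
  proof (rule sum.cong)
    fix k
    have e: "{x \<in> G. card x - 1 = k} = {x \<in> G. card x = k + 1}"
    proof -
      have "card x \<noteq> 0" if "x \<in> G" for x using sc_ne[OF sc that] by auto
      then show ?thesis by force
    qed
    have "(\<Sum>x\<in>{x \<in> G. card x = k + 1}. wt x) = (\<Sum>x\<in>{x \<in> G. card x = k + 1}. (-1) ^ k)"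
      by (rule sum.cong) (auto simp: wt_def)
    then show "(\<Sum>x\<in>{x \<in> G. card x - 1 = k}. wt x) = int (fnum G k) * (-1) ^ k"
      unfolding e fnum_def by simp
  qed simp
  finally show ?thesis .
qed

lemma hcoeff0: "coeff (hpoly G) 0 = (-1) ^ (cdim G + 1) + (\<Sum>k\<le>cdim G. int (fnum G k) * (-1) ^ (cdim G - k))"
  unfolding hpoly_def poly_0_coeff_0[symmetric] by (simp add: poly_sum)

lemma hcoeffd: "coeff (hpoly G) (cdim G + 1) = 1"
proof -
  have z: "coeff (of_nat (fnum G k) * [:-1, 1:] ^ (cdim G - k)) (cdim G + 1) = (0::int)" for k
  proof (rule coeff_eq_0)
    have "degree (of_nat (fnum G k) * [:-1, 1:] ^ (cdim G - k) :: int poly) \<le> 0 + degree ([:-1, 1:] ^ (cdim G - k) :: int poly)"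
      using degree_mult_le[of "of_nat (fnum G k) :: int poly"] by simp
    also have "\<dots> = cdim G - k" using degree_linear_power[of "-1::int"] by simp
    finally show "degree (of_nat (fnum G k) * [:-1, 1:] ^ (cdim G - k) :: int poly) < cdim G + 1" by simp
  qed
  show ?thesis unfolding hpoly_def coeff_add coeff_sum z
    by (simp only: sum.neutral_const add_0_right coeff_linear_power)
qed

lemma part1: assumes sc: "simplicial_complex G" and d: "odd (cdim G)" and ds: "dehn_sommerville G"
  shows "wG G = 0"
proof -
  have "coeff (hpoly G) 0 = coeff (hpoly G) (cdim G + 1)"
    using ds unfolding dehn_sommerville_def by (metis diff_zero le0)
  then have "(-1) ^ (cdim G + 1) + (\<Sum>k\<le>cdim G. int (fnum G k) * (-1) ^ (cdim G - k)) = 1"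
    by (simp only: hcoeff0 hcoeffd)
  moreover have "(-1::int) ^ (cdim G + 1) = 1" using d by simp
  moreover have "(\<Sum>k\<le>cdim G. int (fnum G k) * (-1) ^ (cdim G - k)) = - (\<Sum>k\<le>cdim G. int (fnum G k) * (-1) ^ k)"
    unfolding sum_negf[symmetric]
  proof (rule sum.cong)
    fix k assume "k \<in> {..cdim G}"
    then have "cdim G = (cdim G - k) + k" by simp
    then have "(-1::int) ^ (cdim G - k) * (-1) ^ k = - 1" using d
      by (metis power_add neg_one_odd_power)
    then have "(-1::int) ^ (cdim G - k) = - ((-1) ^ k)"
      by (metis minus_one_mult_self mult.assoc mult.right_neutral mult_minus_left)
    then show "int (fnum G k) * (-1) ^ (cdim G - k) = - (int (fnum G k) * (-1) ^ k)" by simp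
  qed simp
  ultimately show ?thesis using wG_fnum[OF sc] by simp
qed

theorem mainTheorem10:
  shows "(\<forall>G :: 'a set set. simplicial_complex G \<and> G \<noteq> {} \<and> odd (cdim G)
            \<and> dehn_sommerville G \<longrightarrow> wG G = 0)
       \<and> (\<forall>(G :: 'a set set) d. simplicial_complex G \<and> odd d \<and> manifold d G
            \<longrightarrow> wG G = 0)"
  using part1 manifold_chi by blast

end
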